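(* Let $c\in\mathbb{R}^n$, $A\in\mathbb{R}^{m\times n}$, $b\in\mathbb{R}^m$ and $\emptyset\neq I\subseteq\{1,\dots,n\}$, and let $X:=\{x\in\mathbb{R}^n : Ax\ge b,\ x_I\in[0,1]^I\}$ be nonempty and $Y:=\{0,1\}^I$. Consider the problem $$\min_{x,y}\ \|x_I-y\|_1 \quad\text{s.t.}\quad x\in X,\ y\in Y. \qquad (\ast)$$ Apply the alternating direction method to $(\ast)$: starting from $(x^0,y^0)\in X\times Y$, for $k=0,1,\dots$ compute $x^{k+1}\in\arg\min_{x\in X}\|x_I-y^k\|_1$ (a global minimizer) and $y^{k+1}\in\arg\min_{y\in Y}\|x^{k+1}_I-y\|_1$, where ties in the $y$-step are resolved by choosing the lexicographically minimal minimizer, so that the $y$-step has a unique output; the method stops as soon as the current iterate $(x^k,y^k)$ is a partial minimum of $(\ast)$. Then the sequence of iterates $z^k=(x^k,y^k)$ does not cycle, i.e., there is no iteration $k$ and no $l\ge 2$ with $z^k=z^{k+l}$.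
   Context: A point $(x^*,y^* )\in X\times Y$ is a partial minimum of $(\ast)$ if $\|x^*_I-y^*\|_1\le\|x_I-y^*\|_1$ for all $x\in X$ and $\|x^*_I-y^*\|_1\le \|x^*_I-y\|_1$ for all $y\in Y$. $x_I$ denotes the subvector of $x$ with components indexed by $I$. *)

theory Defs
  imports "HOL-Analysis.Analysis" "HOL-Library.Extended_Nat"
begin

text \<open>Vectors in R^n are \<open>real^'n\<close>; the index type 'n is a finite linear order
  (playing the role of {1,...,n} with its natural order). Elements of Y = {0,1}^I are represented as vectors in R^n
  with entries in {0,1} on I and 0 off I (canonical representatives).\<close>

definition feasX :: "real^'n^'m \<Rightarrow> real^'m \<Rightarrow> ('n::finite) set \<Rightarrow> (real^'n) set" where
  "feasX A b I = {x. (\<forall>j. (A *v x) $ j \<ge> b $ j) \<and> (\<forall>i\<in>I. 0 \<le> x $ i \<and> x $ i \<le> 1)}"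

definition binY :: "('n::finite) set \<Rightarrow> (real^'n) set" where
  "binY I = {y. (\<forall>i\<in>I. y $ i = 0 \<or> y $ i = 1) \<and> (\<forall>i. i \<notin> I \<longrightarrow> y $ i = 0)}"

definition dist1I :: "('n::finite) set \<Rightarrow> real^'n \<Rightarrow> real^'n \<Rightarrow> real" where
  "dist1I I x y = (\<Sum>i\<in>I. \<bar>x $ i - y $ i\<bar>)"

definition partial_min :: "real^'n^'m \<Rightarrow> real^'m \<Rightarrow> ('n::finite) set \<Rightarrow> real^'n \<Rightarrow> real^'n \<Rightarrow> bool" where
  "partial_min A b I xs ys \<longleftrightarrow> xs \<in> feasX A b I \<and> ys \<in> binY I \<and>
     (\<forall>x\<in>feasX A b I. dist1I I xs ys \<le> dist1I I x ys) \<and>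
     (\<forall>y\<in>binY I. dist1I I xs ys \<le> dist1I I xs y)"

definition lex_lessI :: "('n::{finite,linorder}) set \<Rightarrow> real^('n::{finite,linorder}) \<Rightarrow> real^('n::{finite,linorder}) \<Rightarrow> bool" where
  "lex_lessI I y y' \<longleftrightarrow> (\<exists>i\<in>I. y $ i < y' $ i \<and> (\<forall>j\<in>I. j < i \<longrightarrow> y $ j = y' $ j))"

definition is_argmin_on :: "'a set \<Rightarrow> ('a \<Rightarrow> real) \<Rightarrow> 'a \<Rightarrow> bool" where
  "is_argmin_on S f z \<longleftrightarrow> z \<in> S \<and> (\<forall>w\<in>S. f z \<le> f w)"

definition lexmin_ystep :: "('n::{finite,linorder}) set \<Rightarrow> real^('n::{finite,linorder}) \<Rightarrow> real^('n::{finite,linorder}) \<Rightarrow> bool" where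
  "lexmin_ystep I x y \<longleftrightarrow> is_argmin_on (binY I) (dist1I I x) y \<and>
     (\<forall>y'. is_argmin_on (binY I) (dist1I I x) y' \<and> y' \<noteq> y \<longrightarrow> lex_lessI I y y')"

end

theory Submission
  imports Defs
begin

lemma enat_le_down: "enat (a + d) \<le> N \<Longrightarrow> enat a \<le> N"
  by (rule order_trans[of _ "enat (a + d)"]) simp_all

theorem mainTheorem1:
  fixes c :: "real^('n::{finite,linorder})"
    and A :: "real^('n::{finite,linorder})^('m::finite)"
    and b :: "real^'m"
    and I :: "('n::{finite,linorder}) set"
    and x y :: "nat \<Rightarrow> real^('n::{finite,linorder})"
    and N :: enat
  assumes "I \<noteq> {}"
    and "feasX A b I \<noteq> {}"
    and "x 0 \<in> feasX A b I" and "y 0 \<in> binY I"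
    and "\<And>k. enat (Suc k) \<le> N \<Longrightarrow>
           \<not> partial_min A b I (x k) (y k) \<and>
           is_argmin_on (feasX A b I) (\<lambda>v. dist1I I v (y k)) (x (Suc k)) \<and>
           lexmin_ystep I (x (Suc k)) (y (Suc k))"
    and "\<And>k. enat k = N \<Longrightarrow> partial_min A b I (x k) (y k)"
  shows "\<not> (\<exists>k l. l \<ge> 2 \<and> enat (k + l) \<le> N \<and> x k = x (k + l) \<and> y k = y (k + l))"
proof
  assume "\<exists>k l. l \<ge> 2 \<and> enat (k + l) \<le> N \<and> x k = x (k + l) \<and> y k = y (k + l)"
  then obtain k l where l: "l \<ge> 2" and kl: "enat (k + l) \<le> N" and ex: "x k = x (k + l)"
    and ey: "y k = y (k + l)" by blast
  define g where "g j = dist1I I (x j) (y j)" for j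
  have inX: "x j \<in> feasX A b I" if "enat j \<le> N" for j
  proof (cases j)
    case 0 then show ?thesis using assms(3) by simp
  next
    case (Suc i) then show ?thesis using assms(5)[of i] that unfolding is_argmin_on_def by auto
  qed
  have inY: "y j \<in> binY I" if "enat j \<le> N" for j
  proof (cases j)
    case 0 then show ?thesis using assms(4) by simp
  next
    case (Suc i) then show ?thesis using assms(5)[of i] that
      unfolding lexmin_ystep_def is_argmin_on_def by auto
  qed
  have st1: "dist1I I (x (Suc j)) (y j) \<le> g j" if "enat (Suc j) \<le> N" for j
  proof -
    have "enat j \<le> N" using enat_le_down[of j 1 N] that by simp
    then show ?thesis using assms(5)[OF that] inX[of j] unfolding is_argmin_on_def g_def by auto
  qed
  have st2: "g (Suc j) \<le> dist1I I (x (Suc j)) (y j)" if "enat (Suc j) \<le> N" for j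
  proof -
    have "enat j \<le> N" using enat_le_down[of j 1 N] that by simp
    then show ?thesis using assms(5)[OF that] inY[of j]
      unfolding lexmin_ystep_def is_argmin_on_def g_def by auto
  qed
  have mono: "g (Suc j) \<le> g j" if "enat (Suc j) \<le> N" for j
    using st1[OF that] st2[OF that] by linarith
  have desc: "g (k + 2 + i) \<le> g (k + 2)" if "enat (k + 2 + i) \<le> N" for i
    using that
  proof (induction i)
    case 0 then show ?case by simp
  next
    case (Suc i)
    have "enat (k + 2 + i) \<le> N" using enat_le_down[of "k + 2 + i" 1 N] Suc.prems by simp
    then have "g (k + 2 + i) \<le> g (k + 2)" using Suc.IH by blast
    moreover have "g (Suc (k + 2 + i)) \<le> g (k + 2 + i)" using mono Suc.prems by simp
    ultimately show ?case by simp
  qed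
  obtain i where li: "l = 2 + i" using l le_Suc_ex by blast
  have "g (k + l) \<le> g (k + 2)" using desc[of i] kl li by (simp add: add.assoc)
  moreover have "g (k + l) = g k" using ex ey g_def by simp
  moreover have N2: "enat (Suc (Suc k)) \<le> N" using enat_le_down[of "Suc (Suc k)" i N] kl li by (simp add: add.assoc)
  moreover have N1: "enat (Suc k) \<le> N" using enat_le_down[of "Suc k" 1 N] N2 by simp
  ultimately have eq: "dist1I I (x (Suc (Suc k))) (y (Suc k)) = g (Suc k)"
    using st1[OF N2] st2[OF N2] st1[OF N1] st2[OF N1] by simp
  have "partial_min A b I (x (Suc k)) (y (Suc k))"
    unfolding partial_min_def
  proof (intro conjI ballI)
    show "x (Suc k) \<in> feasX A b I" using inX N1 by blast
    show "y (Suc k) \<in> binY I" using inY N1 by blast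
    fix v assume "v \<in> feasX A b I"
    then show "dist1I I (x (Suc k)) (y (Suc k)) \<le> dist1I I v (y (Suc k))"
      using assms(5)[OF N2] eq unfolding is_argmin_on_def g_def by force
  next
    fix w assume "w \<in> binY I"
    then show "dist1I I (x (Suc k)) (y (Suc k)) \<le> dist1I I (x (Suc k)) w"
      using assms(5)[OF N1] unfolding lexmin_ystep_def is_argmin_on_def by auto
  qed
  then show False using assms(5)[OF N2] by simp
qed

end
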